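(* Let $d\ge2$, $\Lambda_1,\ldots,\Lambda_d\in\mathcal{M}_2$ and let $C$ be a $d$-copula which is negatively quadrant dependent, i.e. $C(\mathbf{u})\le\Pi(\mathbf{u}):=\prod_{i=1}^du_i$ for all $\mathbf{u}\in[0,1]^d$. Then for every $k=1,\ldots,d$ and $\mathbf{w}\in\mathbb{R}_+^d$, $$\phi_C(\Lambda_1,\ldots,\Lambda_d)(\mathbf{w})\le\phi_\Pi(\Lambda_1,\ldots,\Lambda_d)(\mathbf{w})\le\min_{m\in\{1,\ldots,d\},\,m\neq k}\Lambda_k(w_m,w_k).$$
   Context: A $d$-copula is a distribution function on $[0,1]^d$ with uniform margins. $\mathcal{M}_2$ is the set of bivariate tail dependence functions $\Lambda(\mathbf{w};D)=\lim_{s\searrow0}D(s\mathbf{w})/s$ of $2$-copulas $D$ (defined on $\mathbb{R}_+^2$, $\mathbb{R}_+=[0,\infty)$); they are $1$-Lipschitz and concave with a.e. partial derivatives in $[0,1]$. For a $d$-copula $C$, $\phi_C(\Lambda_1,\ldots,\Lambda_d)(w_1,\ldots,w_d):=\int_0^\infty C(\partial_1\Lambda_1(t,w_1),\ldots,\partial_1\Lambda_d(t,w_d))\,dt$. *)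

theory Defs
  imports "HOL-Probability.Probability"
begin

text \<open>Points of [0,1]^d / R_+^d are represented as functions nat => real; only the
coordinates 0..d-1 are relevant (0-based indexing).\<close>

definition copula :: "nat \<Rightarrow> ((nat \<Rightarrow> real) \<Rightarrow> real) \<Rightarrow> bool" where
  "copula d C \<longleftrightarrow>
     (\<exists>M. prob_space M \<and> sets M = sets (PiM {..<d} (\<lambda>_. (borel :: real measure))) \<and>
          (\<forall>i<d. \<forall>t\<in>{0..1}. measure M {x \<in> space M. x i \<le> t} = t) \<and>
          (\<forall>u. (\<forall>i<d. u i \<in> {0..1}) \<longrightarrow>
                C u = measure M {x \<in> space M. \<forall>i<d. x i \<le> u i}))"

definition indep_copula :: "nat \<Rightarrow> (nat \<Rightarrow> real) \<Rightarrow> real" where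
  "indep_copula d u = (\<Prod>i<d. u i)"

definition is_tdf_of :: "(real \<Rightarrow> real \<Rightarrow> real) \<Rightarrow> ((nat \<Rightarrow> real) \<Rightarrow> real) \<Rightarrow> bool" where
  "is_tdf_of L D \<longleftrightarrow>
     (\<forall>w1 w2. w1 \<ge> 0 \<longrightarrow> w2 \<ge> 0 \<longrightarrow>
        ((\<lambda>s. D (\<lambda>i. s * (if i = 0 then w1 else w2)) / s) \<longlongrightarrow> L w1 w2) (at_right 0))"

definition M2 :: "(real \<Rightarrow> real \<Rightarrow> real) set" where
  "M2 = {L. \<exists>D. copula 2 D \<and> is_tdf_of L D}"

definition partial1 :: "(real \<Rightarrow> real \<Rightarrow> real) \<Rightarrow> real \<Rightarrow> real \<Rightarrow> real" where
  "partial1 L t w = deriv (\<lambda>s. L s w) t"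

definition phi :: "nat \<Rightarrow> ((nat \<Rightarrow> real) \<Rightarrow> real) \<Rightarrow> (nat \<Rightarrow> real \<Rightarrow> real \<Rightarrow> real)
                   \<Rightarrow> (nat \<Rightarrow> real) \<Rightarrow> real" where
  "phi d C L w = integral {0..} (\<lambda>t. C (\<lambda>i. partial1 (L i) t (w i)))"

end

theory Submission
  imports Defs
begin

definition slope :: "(real \<Rightarrow> real) \<Rightarrow> real \<Rightarrow> real \<Rightarrow> real" where
  "slope F x y = (F y - F x) / (y - x)"

definition rd :: "(real \<Rightarrow> real) \<Rightarrow> real \<Rightarrow> real" where
  "rd F t = Sup ((\<lambda>u. slope F t u) ` {t<..})"

definition fh :: "(real \<Rightarrow> real) \<Rightarrow> real \<Rightarrow> real" where
  "fh F t = (if t \<le> 0 then 1 else rd F t)"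

definition good :: "(real \<Rightarrow> real) \<Rightarrow> bool" where
  "good F \<longleftrightarrow> (\<forall>x y. 0 \<le> x \<longrightarrow> x \<le> y \<longrightarrow> 0 \<le> F y - F x \<and> F y - F x \<le> y - x) \<and>
     (\<forall>s t u. 0 < s \<longrightarrow> s < t \<longrightarrow> t < u \<longrightarrow> slope F t u \<le> slope F s t)"

lemma good_lip: "good F \<Longrightarrow> 0 \<le> x \<Longrightarrow> x \<le> y \<Longrightarrow> 0 \<le> F y - F x \<and> F y - F x \<le> y - x"
  unfolding good_def by blast

lemma good_sl: "good F \<Longrightarrow> 0 < s \<Longrightarrow> s < t \<Longrightarrow> t < u \<Longrightarrow> slope F t u \<le> slope F s t"
  unfolding good_def by blast

lemma slope_01: assumes "good F" "0 \<le> x" "x < y" shows "0 \<le> slope F x y" "slope F x y \<le> 1"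
  using good_lip[OF assms(1,2), of y] assms(3) by (auto simp: slope_def field_simps)

lemma slope_split: assumes "x < y" "y < z"
  shows "slope F x z = ((y - x) * slope F x y + (z - y) * slope F y z) / (z - x)"
proof -
  have "(y - x) * slope F x y = F y - F x" "(z - y) * slope F y z = F z - F y"
    using assms by (simp_all add: slope_def)
  then show ?thesis using assms by (simp add: slope_def)
qed

lemma slope3a: assumes "good F" "0 < x" "x < y" "y < z" shows "slope F x z \<le> slope F x y"
proof -
  have "slope F y z \<le> slope F x y" using good_sl assms by blast
  then have "(z - y) * slope F y z \<le> (z - y) * slope F x y"
    using assms by (intro mult_left_mono) auto
  moreover have "(z - x) * slope F x y = (y - x) * slope F x y + (z - y) * slope F x y"
    by (simp add: algebra_simps)
  ultimately have "(y - x) * slope F x y + (z - y) * slope F y z \<le> (z - x) * slope F x y"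
    by linarith
  then show ?thesis using slope_split[OF assms(3,4), of F] assms by (simp add: divide_le_eq mult.commute)
qed

lemma slope3b: assumes "good F" "0 < x" "x < y" "y < z" shows "slope F y z \<le> slope F x z"
proof -
  have "slope F y z \<le> slope F x y" using good_sl assms by blast
  then have "(y - x) * slope F y z \<le> (y - x) * slope F x y"
    using assms by (intro mult_left_mono) auto
  moreover have "(z - x) * slope F y z = (y - x) * slope F y z + (z - y) * slope F y z"
    by (simp add: algebra_simps)
  ultimately have "(z - x) * slope F y z \<le> (y - x) * slope F x y + (z - y) * slope F y z"
    by linarith
  then show ?thesis using slope_split[OF assms(3,4), of F] assms by (simp add: le_divide_eq mult.commute)
qed

lemma rd_props:
  assumes "good F" "0 < t"
  shows "\<And>u. t < u \<Longrightarrow> slope F t u \<le> rd F t"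
    and "\<And>s. 0 < s \<Longrightarrow> s < t \<Longrightarrow> rd F t \<le> slope F s t"
    and "0 \<le> rd F t" and "rd F t \<le> 1"
proof -
  have bdd: "bdd_above ((\<lambda>u. slope F t u) ` {t<..})"
    using slope_01(2)[OF assms(1)] assms by (intro bdd_aboveI[where M=1]) auto
  have ne: "(\<lambda>u. slope F t u) ` {t<..} \<noteq> {}" by auto
  show 1: "\<And>u. t < u \<Longrightarrow> slope F t u \<le> rd F t"
    unfolding rd_def using bdd by (intro cSup_upper) auto
  show "\<And>s. 0 < s \<Longrightarrow> s < t \<Longrightarrow> rd F t \<le> slope F s t"
    unfolding rd_def using ne good_sl[OF assms(1)] by (intro cSup_least) auto
  show "0 \<le> rd F t" using 1[of "t+1"] slope_01(1)[OF assms(1), of t "t+1"] assms by simp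
  show "rd F t \<le> 1"
    unfolding rd_def using ne slope_01(2)[OF assms(1)] assms by (intro cSup_least) auto
qed

lemma rd_anti: assumes "good F" "0 < x" "x < y" shows "rd F y \<le> rd F x"
  using rd_props[OF assms(1), of y] rd_props[OF assms(1), of x] assms by force

lemma fh_01: assumes "good F" shows "0 \<le> fh F t" "fh F t \<le> 1"
  using rd_props[OF assms, of t] by (auto simp: fh_def)

lemma fh_anti: assumes "good F" "0 \<le> x" "x \<le> y" shows "fh F y \<le> fh F x"
  using rd_anti[OF assms(1), of x y] fh_01[OF assms(1), of y] assms
  by (cases "x = y") (auto simp: fh_def)

definition badset :: "(real \<Rightarrow> real) \<Rightarrow> real set" where
  "badset F = {t. 0 < t \<and> (\<exists>e>0. \<forall>s. 0 < s \<and> s < t \<longrightarrow> rd F t + e \<le> slope F s t)}"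

lemma badset_countable: assumes "good F" shows "countable (badset F)"
proof -
  define q where "q t = (SOME r. r \<in> \<rat> \<and> rd F t < r \<and> (\<forall>s. 0 < s \<and> s < t \<longrightarrow> r < slope F s t))" for t
  have q: "q t \<in> \<rat> \<and> rd F t < q t \<and> (\<forall>s. 0 < s \<and> s < t \<longrightarrow> q t < slope F s t)" if tb: "t \<in> badset F" for t
  proof -
    obtain e where e: "e > 0" "\<forall>s. 0 < s \<and> s < t \<longrightarrow> rd F t + e \<le> slope F s t"
      using tb unfolding badset_def by blast
    obtain r where r: "r \<in> \<rat>" "rd F t < r" "r < rd F t + e"
      using Rats_dense_in_real[of "rd F t" "rd F t + e"] e by auto
    have "r \<in> \<rat> \<and> rd F t < r \<and> (\<forall>s. 0 < s \<and> s < t \<longrightarrow> r < slope F s t)"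
      using r e by force
    then show ?thesis unfolding q_def by (rule someI)
  qed
  have inj: "inj_on q (badset F)"
  proof (rule inj_onI)
    fix x y assume xy: "x \<in> badset F" "y \<in> badset F" "q x = q y"
    show "x = y"
    proof (rule ccontr)
      assume "x \<noteq> y"
      then consider "x < y" | "y < x" by linarith
      then show False
      proof cases
        case 1
        have "q y < slope F x y" using q[OF xy(2)] xy(1) 1 unfolding badset_def by auto
        also have "\<dots> \<le> rd F x" using rd_props(1)[OF assms, of x y] xy(1) 1 unfolding badset_def by auto
        also have "\<dots> < q x" using q[OF xy(1)] by auto
        finally show False using xy(3) by simp
      next
        case 2
        have "q x < slope F y x" using q[OF xy(1)] xy(2) 2 unfolding badset_def by auto
        also have "\<dots> \<le> rd F y" using rd_props(1)[OF assms, of y x] xy(2) 2 unfolding badset_def by auto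
        also have "\<dots> < q y" using q[OF xy(2)] by auto
        finally show False using xy(3) by simp
      qed
    qed
  qed
  have "q ` badset F \<subseteq> \<rat>" using q by auto
  then have "countable (q ` badset F)" using countable_rat countable_subset by blast
  then show ?thesis using countable_image_inj_on inj by blast
qed

lemma good_deriv:
  assumes "good F" "0 < t" "t \<notin> badset F"
  shows "(F has_real_derivative rd F t) (at t)"
proof -
  have notbad: "\<forall>e>0. \<exists>s. 0 < s \<and> s < t \<and> slope F s t < rd F t + e"
    using assms(2,3) unfolding badset_def by (auto simp: not_le)
  have bdd: "bdd_above ((\<lambda>u. slope F t u) ` {t<..})"
    using slope_01(2)[OF assms(1)] assms by (intro bdd_aboveI[where M=1]) auto
  have right: "\<exists>u>t. rd F t - e < slope F t u" if "e > 0" for e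
  proof -
    have "rd F t - e < Sup ((\<lambda>u. slope F t u) ` {t<..})" using that unfolding rd_def by simp
    then show ?thesis using less_cSup_iff[OF _ bdd] by auto
  qed
  show ?thesis
    unfolding has_field_derivative_iff
  proof (rule tendstoI)
    fix e :: real assume e: "e > 0"
    obtain s where s: "0 < s" "s < t" "slope F s t < rd F t + e" using notbad e by blast
    obtain u where u: "u > t" "rd F t - e < slope F t u" using right e by blast
    show "\<forall>\<^sub>F y in at t. dist ((F y - F t) / (y - t)) (rd F t) < e"
      unfolding eventually_at
    proof (intro exI[of _ "min (t - s) (u - t)"] conjI ballI impI)
      show "0 < min (t - s) (u - t)" using s u by simp
      fix y assume y: "y \<in> UNIV" "y \<noteq> t \<and> dist y t < min (t - s) (u - t)"
      then have yr: "s < y" "y < u" by (auto simp: dist_real_def abs_if split: if_splits)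
      show "dist ((F y - F t) / (y - t)) (rd F t) < e"
      proof (cases "y < t")
        case True
        have eq: "(F y - F t) / (y - t) = slope F y t" unfolding slope_def by (metis minus_diff_eq minus_divide_divide)
        have "rd F t \<le> slope F y t" using rd_props(2)[OF assms(1,2), of y] True yr s by auto
        moreover have "slope F y t \<le> slope F s t" using slope3b[OF assms(1), of s y t] s yr True by auto
        ultimately show ?thesis using s(3) eq by (auto simp: dist_real_def)
      next
        case False
        then have yt: "t < y" using y by auto
        have eq: "(F y - F t) / (y - t) = slope F t y" by (simp add: slope_def)
        have "slope F t y \<le> rd F t" using rd_props(1)[OF assms(1,2)] yt by auto
        moreover have "slope F t u \<le> slope F t y" using slope3a[OF assms(1), of t y u] assms yt yr by auto
        ultimately show ?thesis using u eq by (auto simp: dist_real_def)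
      qed
    qed
  qed
qed

lemma anti_int:
  fixes h :: "real \<Rightarrow> real"
  assumes "\<And>x y. 0 \<le> x \<Longrightarrow> x \<le> y \<Longrightarrow> h y \<le> h x"
  shows "h integrable_on {0..T}"
proof -
  have "mono_on {0..T} (\<lambda>x. - h x)"
    using assms by (auto simp: mono_on_def)
  then have "(\<lambda>x. - h x) integrable_on {0..T}" by (rule integrable_on_mono_on)
  then have "(\<lambda>x. - (- h x)) integrable_on {0..T}" by (rule integrable_neg)
  then show ?thesis by simp
qed

lemma fh_integrable: "good F \<Longrightarrow> fh F integrable_on {0..T}"
  by (rule anti_int) (rule fh_anti)

lemma piece_bound:
  assumes "good F" "0 \<le> a" "0 \<le> h"
  shows "integral {a..a+h} (fh F) \<le> h * fh F a"
proof -
  have "integral {a..a+h} (fh F) \<le> integral {a..a+h} (\<lambda>_. fh F a)"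
    using assms fh_anti[OF assms(1)]
    by (intro integral_le integrable_const_ivl) (auto intro: integrable_subinterval_real[OF fh_integrable[OF assms(1), of "a+h"]])
  then show ?thesis using assms by simp
qed

lemma fh_int_bound:
  assumes g: "good F" and T: "0 \<le> T"
  shows "integral {0..T} (fh F) \<le> F T - F 0"
proof (cases "T = 0")
  case True then show ?thesis by simp
next
  case False
  then have T0: "T > 0" using T by simp
  have main: "integral {0..T} (fh F) \<le> 2 * (T / real N) + F T - F 0" if N: "N \<ge> 2" for N :: nat
  proof -
    define h where "h = T / real N"
    have h0: "h > 0" using T0 N by (simp add: h_def)
    have Q: "integral {0..(real n + 2) * h} (fh F) \<le> 2 * h + F ((real n + 1) * h) - F h" for n :: nat
    proof (induction n)
      case 0
      have "integral {0..2 * h} (fh F) \<le> integral {0..2*h} (\<lambda>_. 1::real)"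
        using fh_01[OF g] by (intro integral_le integrable_const_ivl fh_integrable[OF g]) auto
      then show ?case using h0 by simp
    next
      case (Suc n)
      have p1: "(real n + 2) * h > 0" "(real n + 1) * h > 0" using h0 by simp_all
      have p2: "(real n + 1) * h < (real n + 2) * h" using h0 by simp
      have fheq: "fh F ((real n+2)*h) = rd F ((real n+2)*h)" using p1(1) unfolding fh_def by (simp only: not_le[symmetric] if_False)
      have eq1: "(real (Suc n) + 2) * h = (real n + 2) * h + h" by (simp add: algebra_simps)
      have "integral {0..(real (Suc n) + 2) * h} (fh F) =
            integral {0..(real n + 2) * h} (fh F) + integral {(real n + 2) * h..(real n + 2) * h + h} (fh F)"
        unfolding eq1 using h0 Henstock_Kurzweil_Integration.integral_combine[where a=0 and c="(real n+2)*h" and b="(real n+2)*h+h" and f="fh F", OF _ _ fh_integrable[OF g]]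
        by simp
      also have "\<dots> \<le> 2 * h + F ((real n + 1) * h) - F h + h * fh F ((real n + 2) * h)"
        using Suc piece_bound[OF g, of "(real n + 2) * h" h] h0 by simp
      also have "h * fh F ((real n + 2) * h) \<le> h * slope F ((real n + 1) * h) ((real n + 2) * h)"
        using rd_props(2)[OF g, of "(real n + 2) * h" "(real n + 1) * h"] h0
          p1 p2 fheq
        by (intro mult_left_mono) auto
      also have "h * slope F ((real n + 1) * h) ((real n + 2) * h) = F ((real n + 2) * h) - F ((real n + 1) * h)"
      proof -
        have dh: "(real n + 2) * h - (real n + 1) * h = h" by (simp add: algebra_simps)
        show ?thesis unfolding slope_def dh using h0 by simp
      qed
      finally show ?case by (simp add: algebra_simps)
    qed
    have eqT: "(real (N - 2) + 2) * h = T" using N h0 by (simp add: h_def of_nat_diff)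
    have e1: "(real (N - 2) + 1) * h = T - h" using eqT by (simp add: distrib_right; linarith)
    have "F ((real (N - 2) + 1) * h) \<le> F T"
      using good_lip[OF g, of "(real (N - 2) + 1) * h" T] h0 e1
      by (smt (verit) mult_nonneg_nonneg of_nat_0_le_iff)
    moreover have "F 0 \<le> F h" using good_lip[OF g, of 0 h] h0 by simp
    moreover have "integral {0..T} (fh F) \<le> 2 * h + F ((real (N - 2) + 1) * h) - F h"
      using Q[of "N - 2"] eqT by metis
    ultimately show ?thesis unfolding h_def by linarith
  qed
  show ?thesis
  proof (rule field_le_epsilon)
    fix e :: real assume e: "e > 0"
    obtain N :: nat where N: "N > max 2 (2 * T / e)" using reals_Archimedean2 by blast
    have "2 * (T / real N) \<le> e" using N e T0 by (simp add: field_simps)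
    then show "integral {0..T} (fh F) \<le> F T - F 0 + e" using main[of N] N by simp
  qed
qed

lemma int_halfline:
  fixes g :: "real \<Rightarrow> real"
  assumes nn: "\<And>x. 0 \<le> x \<Longrightarrow> 0 \<le> g x"
    and int: "\<And>T. 0 \<le> T \<Longrightarrow> g integrable_on {0..T}"
    and bnd: "\<And>T. 0 \<le> T \<Longrightarrow> integral {0..T} g \<le> B"
  shows "g integrable_on {0..} \<and> integral {0..} g \<le> B"
proof -
  define f where "f k = (\<lambda>x. if x \<in> {..real k} then g x else 0)" for k :: nat
  have eqI: "integral {0..} (f k) = integral {0..real k} g" for k
    unfolding f_def integral_restrict_Int[of "{0..}" "{..real k}" g] by (simp add: atLeastAtMost_def Int_commute)
  have fi: "f k integrable_on {0..}" for k
    unfolding f_def integrable_restrict_Int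
    using int[of "real k"] by (simp add: Int_commute atLeastAtMost_def)
  have mono: "f k x \<le> f (Suc k) x" if "x \<in> {0..}" for k x
    using nn that by (auto simp: f_def)
  have lim: "(\<lambda>k. f k x) \<longlonglongrightarrow> g x" if "x \<in> {0..}" for x
  proof (rule tendsto_eventually)
    obtain K :: nat where "x \<le> real K" using real_arch_simple by blast
    then show "\<forall>\<^sub>F k in sequentially. f k x = g x"
      unfolding eventually_sequentially f_def
      by (intro exI[of _ K]) (auto intro: order_trans)
  qed
  have bounded: "bounded (range (\<lambda>k. integral {0..} (f k)))"
  proof -
    have "\<bar>integral {0..} (f k)\<bar> \<le> B" for k
      unfolding eqI using bnd[of "real k"] integral_nonneg[OF int[of "real k"], of ] nn
      by (smt (verit, best) atLeastAtMost_iff integral_nonneg of_nat_0_le_iff)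
    then show ?thesis unfolding bounded_iff by (auto simp: real_norm_def)
  qed
  from monotone_convergence_increasing[OF fi mono lim bounded]
  have *: "g integrable_on {0..}" "(\<lambda>k. integral {0..} (f k)) \<longlonglongrightarrow> integral {0..} g" by auto
  have "integral {0..} g \<le> B"
    using *(2) by (rule LIMSEQ_le_const2) (auto simp: eqI intro!: exI[of _ 0] bnd)
  then show ?thesis using * by simp
qed

lemma geo:
  fixes F :: "real \<Rightarrow> real"
  assumes G1: "\<And>x y. 0 \<le> x \<Longrightarrow> x \<le> y \<Longrightarrow> 0 \<le> F y - F x \<and> F y - F x \<le> y - x"
    and S: "\<And>x y c. 0 \<le> x \<Longrightarrow> x \<le> y \<Longrightarrow> 1 \<le> c \<Longrightarrow> F (c * y) - F (c * x) \<le> c * (F y - F x)"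
    and st: "0 < s" "s < t" "t < u"
  shows "slope F t u \<le> slope F s t"
proof -
  define m where "m r = (F t - F (t / r)) / (t - t / r)" for r :: real
  have t0: "t > 0" using st by simp
  have mEq: "(t - t / r) * m r = F t - F (t / r)" if "r > 1" for r
  proof -
    have "t / r < t" using that t0 by (simp add: divide_less_eq)
    then show ?thesis unfolding m_def by simp
  qed
  have A: "F (t * r ^ n) - F t \<le> (t * r ^ n - t) * m r" if r: "r > 1" for r n
  proof (induction n)
    case 0 then show ?case by simp
  next
    case (Suc n)
    have "F (r ^ Suc n * t) - F (r ^ Suc n * (t / r)) \<le> r ^ Suc n * (F t - F (t / r))"
    proof (rule S)
      show "1 \<le> r ^ Suc n" using r by (intro one_le_power) simp
    qed (use r t0 in \<open>auto simp: divide_le_eq\<close>)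
    moreover have "r ^ Suc n * (t / r) = t * r ^ n" using r by simp
    moreover have "r ^ Suc n * (F t - F (t / r)) = (t * r ^ Suc n - t * r ^ n) * m r"
    proof -
      have "r ^ Suc n * (F t - F (t / r)) = r ^ Suc n * ((t - t / r) * m r)" using mEq r by simp
      also have "\<dots> = (t * r ^ Suc n - t * r ^ n) * m r" using r by (simp add: field_simps)
      finally show ?thesis .
    qed
    ultimately have "F (t * r ^ Suc n) - F (t * r ^ n) \<le> (t * r ^ Suc n - t * r ^ n) * m r"
      by (simp add: mult.commute)
    then show ?case using Suc by (simp add: algebra_simps)
  qed
  have B: "(t - t / r ^ k) * m r \<le> F t - F (t / r ^ k)" if r: "r > 1" for r k
  proof (induction k)
    case 0 then show ?case by simp
  next
    case (Suc k)
    have rk: "r ^ k > 0" "r ^ k \<ge> 1" using r by (auto simp: one_le_power)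
    have "F (r ^ k * (t / r ^ k)) - F (r ^ k * (t / r ^ Suc k)) \<le> r ^ k * (F (t / r ^ k) - F (t / r ^ Suc k))"
      using r t0 rk by (intro S) (auto simp: divide_le_eq field_simps)
    moreover have "r ^ k * (t / r ^ k) = t" "r ^ k * (t / r ^ Suc k) = t / r" using rk r by auto
    ultimately have "F t - F (t / r) \<le> r ^ k * (F (t / r ^ k) - F (t / r ^ Suc k))" by simp
    then have "(t - t / r) * m r \<le> r ^ k * (F (t / r ^ k) - F (t / r ^ Suc k))" using mEq r by simp
    then have "(t - t / r) * m r / r ^ k \<le> F (t / r ^ k) - F (t / r ^ Suc k)"
      using rk by (simp add: divide_le_eq mult.commute)
    moreover have "(t - t / r) * m r / r ^ k = (t / r ^ k - t / r ^ Suc k) * m r"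
      using rk r by (simp add: field_simps)
    ultimately show ?case using Suc by (simp add: algebra_simps)
  qed
  define \<sigma> where "\<sigma> = slope F t u"
  have \<sigma>0: "0 \<le> \<sigma>" using G1[of t u] st unfolding \<sigma>_def slope_def by simp
  show ?thesis
  proof (rule ccontr)
    assume "\<not> ?thesis"
    then have "(F t - F s) / (t - s) < \<sigma>" unfolding \<sigma>_def slope_def by simp
    then have lt: "F t - F s < (t - s) * \<sigma>" using st
      by (simp add: pos_divide_less_eq mult.commute)
    define gap where "gap = (t - s) * \<sigma> - (F t - F s)"
    have gap: "gap > 0" using lt unfolding gap_def by simp
    define r0 where "r0 = 1 + gap / (2 * (s * \<sigma> + 1))"
    have sp: "s * \<sigma> \<ge> 0" using st \<sigma>0 by simp
    have r0: "r0 > 1" using gap sp unfolding r0_def by (simp add: mult.commute add_pos_nonneg)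
    have r0s: "(r0 - 1) * (s * \<sigma>) < gap"
    proof -
      have "(r0 - 1) * (s * \<sigma>) = gap * (s * \<sigma>) / (2 * (s * \<sigma> + 1))" unfolding r0_def by simp
      also have "\<dots> < gap"
      proof -
        have "gap * (s * \<sigma>) < gap * (2 * (s * \<sigma> + 1))" using gap sp by (intro mult_strict_left_mono) (auto simp: algebra_simps)
        moreover have "0 < 2 * (s * \<sigma> + 1)" using sp by (smt (verit))
        ultimately show ?thesis by (simp add: pos_divide_less_eq)
      qed
      finally show ?thesis .
    qed
    have ut: "u / t > 0" "u / t > 1" using st by auto
    have "eventually (\<lambda>n. root n (u / t) < r0) sequentially"
      using order_tendstoD(2)[OF LIMSEQ_root_const[OF ut(1)] r0] .
    then obtain n where n: "n > 0" "root n (u / t) < r0"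
      unfolding eventually_sequentially by (metis le_add2 add_gr_0 less_one)
    define \<rho> where "\<rho> = root n (u / t)"
    have \<rho>1: "\<rho> > 1" using n ut unfolding \<rho>_def by simp
    have \<rho>n: "\<rho> ^ n = u / t" using n ut unfolding \<rho>_def by simp
    have "F u - F t \<le> (u - t) * m \<rho>" using A[OF \<rho>1, of n] \<rho>n t0 by simp
    then have \<sigma>m: "\<sigma> \<le> m \<rho>" using st unfolding \<sigma>_def slope_def by (simp add: divide_le_eq mult.commute)
    obtain K where K: "t / s < \<rho> ^ K" using real_arch_pow[OF \<rho>1] by blast
    define k0 where "k0 = (LEAST K. t / s < \<rho> ^ K)"
    have k0: "t / s < \<rho> ^ k0" unfolding k0_def using K by (rule LeastI)
    have k0pos: "k0 > 0" using k0 st by (cases k0) (auto simp: divide_less_eq)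
    define k where "k = k0 - 1"
    have kS: "Suc k = k0" using k0pos unfolding k_def by simp
    have "\<not> t / s < \<rho> ^ k" unfolding k_def k0_def by (rule not_less_Least) (use k0pos k0_def k_def in simp)
    then have k1: "s \<le> t / \<rho> ^ k" using st \<rho>1 by (simp add: field_simps not_less)
    have k2: "t / \<rho> ^ k < \<rho> * s"
    proof -
      have "t / s < \<rho> ^ Suc k" using k0 kS by simp
      then show ?thesis using st \<rho>1 by (simp add: field_simps)
    qed
    have tk: "t / \<rho> ^ k \<le> t" using \<rho>1 t0 by (simp add: divide_le_eq one_le_power)
    have "F t - F s \<ge> F t - F (t / \<rho> ^ k)" using G1[of s "t / \<rho> ^ k"] k1 st by simp
    moreover have "F t - F (t / \<rho> ^ k) \<ge> (t - t / \<rho> ^ k) * m \<rho>" using B[OF \<rho>1] by simp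
    moreover have "(t - t / \<rho> ^ k) * m \<rho> \<ge> (t - t / \<rho> ^ k) * \<sigma>" using \<sigma>m tk by (intro mult_left_mono) auto
    moreover have "(t - t / \<rho> ^ k) * \<sigma> \<ge> (t - \<rho> * s) * \<sigma>" using k2 \<sigma>0 by (intro mult_right_mono) auto
    moreover have "(t - \<rho> * s) * \<sigma> \<ge> (t - r0 * s) * \<sigma>"
      using \<sigma>0 n(2) st unfolding \<rho>_def by (intro mult_right_mono) auto
    moreover have "(t - r0 * s) * \<sigma> > F t - F s"
    proof -
      have "(t - r0 * s) * \<sigma> = (t - s) * \<sigma> - (r0 - 1) * (s * \<sigma>)" by (simp add: algebra_simps)
      then show ?thesis using r0s unfolding gap_def by linarith
    qed
    ultimately show False by linarith
  qed
qed

lemma cop_meas: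
  fixes d :: nat and u :: "nat \<Rightarrow> real"
  assumes sM: "sets M = sets (PiM {..<d} (\<lambda>_. (borel :: real measure)))"
  shows "{x \<in> space M. \<forall>i<d. x i \<le> u i} \<in> sets M"
    and "\<And>i. i < d \<Longrightarrow> {x \<in> space M. x i \<le> t} \<in> sets M"
proof -
  have comp: "(\<lambda>x. x i) \<in> borel_measurable M" if "i < d" for i
  proof -
    have "(\<lambda>x. x i) \<in> PiM {..<d} (\<lambda>_. (borel :: real measure)) \<rightarrow>\<^sub>M borel"
      using measurable_component_singleton[of i "{..<d}" "\<lambda>_. borel"] that by auto
    then show ?thesis by (simp add: measurable_cong_sets[OF sM refl])
  qed
  show single: "\<And>i. i < d \<Longrightarrow> {x \<in> space M. x i \<le> t} \<in> sets M" for t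
  proof -
    fix i assume i: "i < d"
    show "{x \<in> space M. x i \<le> t} \<in> sets M"
      by (rule borel_measurable_le[OF comp[OF i] borel_measurable_const])
  qed
  have "{x \<in> space M. \<forall>i\<in>{..<d}. x i \<le> u i} \<in> sets M"
  proof (rule sets.sets_Collect_finite_All)
    fix i assume "i \<in> {..<d}"
    then show "{x \<in> space M. x i \<le> u i} \<in> sets M" by (intro single) (simp only: lessThan_iff)
  qed (rule finite_lessThan)
  then show "{x \<in> space M. \<forall>i<d. x i \<le> u i} \<in> sets M" by (simp only: lessThan_iff Ball_def)
qed

lemma copula_nonneg': assumes "copula d C" "\<forall>i<d. u i \<in> {0..1}" shows "0 \<le> C u"
proof -
  obtain M where "\<forall>u. (\<forall>i<d. u i \<in> {0..1}) \<longrightarrow> C u = measure M {x \<in> space M. \<forall>i<d. x i \<le> u i}"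
    using assms(1) unfolding copula_def by blast
  then show ?thesis using assms(2) by simp
qed

lemma copula_mono:
  assumes "copula d C" "\<forall>i<d. u i \<in> {0..1}" "\<forall>i<d. v i \<in> {0..1}" "\<forall>i<d. u i \<le> v i"
  shows "C u \<le> C v"
proof -
  obtain M where M: "prob_space M" "sets M = sets (PiM {..<d} (\<lambda>_. (borel :: real measure)))"
    "\<forall>u. (\<forall>i<d. u i \<in> {0..1}) \<longrightarrow> C u = measure M {x \<in> space M. \<forall>i<d. x i \<le> u i}"
    using assms(1) unfolding copula_def by blast
  interpret prob_space M by fact
  have "measure M {x \<in> space M. \<forall>i<d. x i \<le> u i} \<le> measure M {x \<in> space M. \<forall>i<d. x i \<le> v i}"
  proof (rule finite_measure_mono)
    show "{x \<in> space M. \<forall>i<d. x i \<le> u i} \<subseteq> {x \<in> space M. \<forall>i<d. x i \<le> v i}"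
      using assms(4) by (auto intro: order_trans)
  qed (rule cop_meas(1)[OF M(2)])
  then show ?thesis using M(3) assms(2,3) by simp
qed

definition D2 :: "((nat \<Rightarrow> real) \<Rightarrow> real) \<Rightarrow> real \<Rightarrow> real \<Rightarrow> real" where
  "D2 D a b = D (\<lambda>i. if i = 0 then a else b)"

lemma cop2:
  assumes "copula 2 D" and ab: "a \<in> {0..1}" "a' \<in> {0..1}" "b \<in> {0..1}" "b' \<in> {0..1}"
  shows "0 \<le> D2 D a b" "D2 D a b \<le> a" "D2 D a b \<le> b"
    "a \<le> a' \<Longrightarrow> D2 D a' b - D2 D a b \<le> a' - a"
    "a \<le> a' \<Longrightarrow> D2 D a b \<le> D2 D a' b"
    "a \<le> a' \<Longrightarrow> b \<le> b' \<Longrightarrow> D2 D a' b - D2 D a b \<le> D2 D a' b' - D2 D a b'"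
proof -
  obtain M where M: "prob_space M" "sets M = sets (PiM {..<2} (\<lambda>_. (borel :: real measure)))"
    "\<forall>i<2. \<forall>t\<in>{0..1}. measure M {x \<in> space M. x i \<le> t} = t"
    "\<forall>u. (\<forall>i<2. u i \<in> {0..1}) \<longrightarrow> D u = measure M {x \<in> space M. \<forall>i<2. x i \<le> u i}"
    using assms(1) unfolding copula_def by blast
  interpret prob_space M by fact
  define A where "A a b = {x \<in> space M. x 0 \<le> a \<and> x 1 \<le> b}" for a b :: real
  define X where "X i t = {x \<in> space M. x i \<le> t}" for i :: nat and t :: real
  have all2: "(\<forall>i<2. P i) \<longleftrightarrow> P 0 \<and> P (1::nat)" for P by (auto simp: less_2_cases_iff)
  have DA: "D2 D a b = measure M (A a b)" if "a \<in> {0..1}" "b \<in> {0..1}" for a b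
  proof -
    have "D2 D a b = measure M {x \<in> space M. \<forall>i<2. x i \<le> (if i = 0 then a else b)}"
      unfolding D2_def using M(4) that by (simp add: all2)
    also have "{x \<in> space M. \<forall>i<2. x i \<le> (if i = 0 then a else b)} = A a b"
      unfolding A_def by (simp add: all2)
    finally show ?thesis .
  qed
  have Am: "A a b \<in> sets M" for a b
  proof -
    have "{x \<in> space M. \<forall>i<2. x i \<le> (if i = 0 then a else b)} \<in> sets M"
      by (rule cop_meas(1)[OF M(2)])
    moreover have "{x \<in> space M. \<forall>i<2. x i \<le> (if i = 0 then a else b)} = A a b"
      unfolding A_def by (simp add: all2)
    ultimately show ?thesis by simp
  qed
  have Xm: "X i t \<in> sets M" if "i < 2" for i t
    unfolding X_def using cop_meas(2)[OF M(2) that] .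
  have XA: "measure M (X i t) = t" if "i < 2" "t \<in> {0..1}" for i t
    using M(3) that unfolding X_def by blast
  show "0 \<le> D2 D a b" using DA ab by simp
  show "D2 D a b \<le> a"
    using DA[OF ab(1,3)] XA[of 0 a] ab finite_measure_mono[of "A a b" "X 0 a"] Xm[of 0 a]
    by (auto simp: A_def X_def)
  show "D2 D a b \<le> b"
    using DA[OF ab(1,3)] XA[of 1 b] ab finite_measure_mono[of "A a b" "X 1 b"] Xm[of 1 b]
    by (auto simp: A_def X_def)
  assume aa: "a \<le> a'"
  have sub1: "A a b \<subseteq> A a' b" "A a b' \<subseteq> A a' b'" using aa by (auto simp: A_def)
  have diff1: "D2 D a' b - D2 D a b = measure M (A a' b - A a b)"
    using DA ab finite_measure_Diff[OF Am Am sub1(1)] by simp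
  show "D2 D a' b - D2 D a b \<le> a' - a"
  proof -
    have "A a' b - A a b \<subseteq> X 0 a' - X 0 a" using aa by (auto simp: A_def X_def)
    then have "measure M (A a' b - A a b) \<le> measure M (X 0 a' - X 0 a)"
      using Xm by (intro finite_measure_mono) auto
    also have "\<dots> = a' - a"
    proof -
      have x0: "X 0 t \<in> sets M" for t by (rule Xm) simp
      have "X 0 a \<subseteq> X 0 a'" using aa by (auto simp: X_def)
      then have "measure M (X 0 a' - X 0 a) = measure M (X 0 a') - measure M (X 0 a)"
        by (rule finite_measure_Diff[OF x0 x0])
      then show ?thesis using XA[of 0 a] XA[of 0 a'] ab by simp
    qed
    finally show ?thesis using diff1 by simp
  qed
  show "D2 D a b \<le> D2 D a' b"
    using DA ab finite_measure_mono[OF sub1(1) Am] by simp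
  assume bb: "b \<le> b'"
  have "A a' b - A a b \<subseteq> A a' b' - A a b'" using bb by (auto simp: A_def)
  then have "measure M (A a' b - A a b) \<le> measure M (A a' b' - A a b')"
    using Am by (intro finite_measure_mono) auto
  moreover have "D2 D a' b' - D2 D a b' = measure M (A a' b' - A a b')"
    using DA ab finite_measure_Diff[OF Am Am sub1(2)] by simp
  ultimately show "D2 D a' b - D2 D a b \<le> D2 D a' b' - D2 D a b'" using diff1 by simp
qed

lemma tdf_lim:
  assumes "is_tdf_of L D" "0 \<le> t" "0 \<le> w"
  shows "((\<lambda>s. D2 D (s * t) (s * w) / s) \<longlongrightarrow> L t w) (at_right 0)"
proof -
  have eq: "(\<lambda>s. D2 D (s * t) (s * w) / s) = (\<lambda>s. D (\<lambda>i. s * (if i = 0 then t else w)) / s)"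
    unfolding D2_def by (simp add: if_distrib)
  show ?thesis unfolding eq using assms unfolding is_tdf_of_def by blast
qed

lemma ev01:
  fixes t w :: real
  assumes "0 \<le> t" "0 \<le> w"
  shows "eventually (\<lambda>s. 0 < s \<and> s * t \<in> {0..1} \<and> s * w \<in> {0..1}) (at_right 0)"
proof -
  have b: "(0::real) < 1 / (1 + t + w)" using assms by simp
  have "\<forall>y>0. y < 1 / (1 + t + w) \<longrightarrow> 0 < y \<and> y * t \<in> {0..1} \<and> y * w \<in> {0..1}"
  proof (intro allI impI)
  fix y :: real assume y: "0 < y" "y < 1 / (1 + t + w)"
  then have "y * (1 + t + w) < 1" using assms by (simp add: less_divide_eq)
  then have "y * t \<le> 1" "y * w \<le> 1" using y assms
    by (smt (verit) distrib_left mult_nonneg_nonneg)+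
  then show "0 < y \<and> y * t \<in> {0..1} \<and> y * w \<in> {0..1}" using y assms by auto
  qed
  then show ?thesis unfolding eventually_at_right_field using b by blast
qed

lemma Lprops:
  assumes C: "copula 2 D" and T: "is_tdf_of L D"
    and nn: "0 \<le> t" "0 \<le> t'" "0 \<le> w" "0 \<le> w'"
  shows "0 \<le> L t w" "L t w \<le> t" "L t w \<le> w"
    "t \<le> t' \<Longrightarrow> L t' w - L t w \<le> t' - t"
    "t \<le> t' \<Longrightarrow> L t w \<le> L t' w"
    "t \<le> t' \<Longrightarrow> w \<le> w' \<Longrightarrow> L t' w - L t w \<le> L t' w' - L t w'"
proof -
  have nt: "at_right (0::real) \<noteq> bot" by simp
  note lim = tdf_lim[OF T]
  have ev: "eventually (\<lambda>s. 0 < s \<and> s * t \<in> {0..1} \<and> s * w \<in> {0..1} \<and> s * t' \<in> {0..1} \<and> s * w' \<in> {0..1}) (at_right 0)"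
    using eventually_conj[OF ev01[OF nn(1,3)] ev01[OF nn(2,4)]] by (rule eventually_mono) auto
  show "0 \<le> L t w"
    using nt lim[OF nn(1,3)] tendsto_const
    by (rule tendsto_le) (rule eventually_mono[OF ev], use cop2(1)[OF C] in auto)
  show "L t w \<le> t"
  proof (rule tendsto_le[OF nt tendsto_const lim[OF nn(1,3)]])
    show "\<forall>\<^sub>F x in at_right 0. D2 D (x * t) (x * w) / x \<le> t"
      using ev by (rule eventually_mono) (use cop2(2)[OF C] in \<open>auto simp: divide_le_eq mult.commute\<close>)
  qed
  show "L t w \<le> w"
  proof (rule tendsto_le[OF nt tendsto_const lim[OF nn(1,3)]])
    show "\<forall>\<^sub>F x in at_right 0. D2 D (x * t) (x * w) / x \<le> w"
      using ev by (rule eventually_mono) (use cop2(3)[OF C] in \<open>auto simp: divide_le_eq mult.commute\<close>)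
  qed
  assume tt: "t \<le> t'"
  show "L t' w - L t w \<le> t' - t"
  proof (rule tendsto_le[OF nt tendsto_const tendsto_diff[OF lim[OF nn(2,3)] lim[OF nn(1,3)]]])
    show "\<forall>\<^sub>F x in at_right 0. D2 D (x * t') (x * w) / x - D2 D (x * t) (x * w) / x \<le> t' - t"
      using ev
    proof (rule eventually_mono)
      fix s :: real assume s: "0 < s \<and> s * t \<in> {0..1} \<and> s * w \<in> {0..1} \<and> s * t' \<in> {0..1} \<and> s * w' \<in> {0..1}"
      have "s * t \<le> s * t'" using s tt by (intro mult_left_mono) auto
      then have "D2 D (s * t') (s * w) - D2 D (s * t) (s * w) \<le> s * t' - s * t"
        using cop2(4)[OF C, of "s * t" "s * t'" "s * w"] s by auto
      then show "D2 D (s * t') (s * w) / s - D2 D (s * t) (s * w) / s \<le> t' - t"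
      proof -
        have "(D2 D (s * t') (s * w) - D2 D (s * t) (s * w)) / s \<le> (s * t' - s * t) / s"
          using s \<open>D2 D (s * t') (s * w) - D2 D (s * t) (s * w) \<le> s * t' - s * t\<close>
          by (intro divide_right_mono) auto
        moreover have "(s * t' - s * t) / s = t' - t" using s by (simp add: field_simps)
        ultimately show ?thesis by (simp add: diff_divide_distrib)
      qed
    qed
  qed
  show "L t w \<le> L t' w"
  proof (rule tendsto_le[OF nt lim[OF nn(2,3)] lim[OF nn(1,3)]])
    show "\<forall>\<^sub>F x in at_right 0. D2 D (x * t) (x * w) / x \<le> D2 D (x * t') (x * w) / x"
      using ev
    proof (rule eventually_mono)
      fix s :: real assume s: "0 < s \<and> s * t \<in> {0..1} \<and> s * w \<in> {0..1} \<and> s * t' \<in> {0..1} \<and> s * w' \<in> {0..1}"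
      have "s * t \<le> s * t'" using s tt by (intro mult_left_mono) auto
      then have "D2 D (s * t) (s * w) \<le> D2 D (s * t') (s * w)"
        using cop2(5)[OF C, of "s * t" "s * t'" "s * w"] s by auto
      then show "D2 D (s * t) (s * w) / s \<le> D2 D (s * t') (s * w) / s"
        using s by (simp add: divide_right_mono)
    qed
  qed
  assume ww: "w \<le> w'"
  show "L t' w - L t w \<le> L t' w' - L t w'"
  proof (rule tendsto_le[OF nt tendsto_diff[OF lim[OF nn(2,4)] lim[OF nn(1,4)]] tendsto_diff[OF lim[OF nn(2,3)] lim[OF nn(1,3)]]])
    show "\<forall>\<^sub>F x in at_right 0. D2 D (x * t') (x * w) / x - D2 D (x * t) (x * w) / x
        \<le> D2 D (x * t') (x * w') / x - D2 D (x * t) (x * w') / x"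
      using ev
    proof (rule eventually_mono)
      fix s :: real assume s: "0 < s \<and> s * t \<in> {0..1} \<and> s * w \<in> {0..1} \<and> s * t' \<in> {0..1} \<and> s * w' \<in> {0..1}"
      have "s * t \<le> s * t'" "s * w \<le> s * w'" using s tt ww by (intro mult_left_mono; auto)+
      then have "D2 D (s * t') (s * w) - D2 D (s * t) (s * w) \<le> D2 D (s * t') (s * w') - D2 D (s * t) (s * w')"
        using cop2(6)[OF C, of "s * t" "s * t'" "s * w" "s * w'"] s by auto
      then show "D2 D (s * t') (s * w) / s - D2 D (s * t) (s * w) / s
        \<le> D2 D (s * t') (s * w') / s - D2 D (s * t) (s * w') / s"
        using s by (simp add: diff_divide_distrib[symmetric] divide_right_mono)
    qed
  qed
qed

lemma Lhom:
  assumes T: "is_tdf_of L D" and c: "c > 0" and nn: "0 \<le> t" "0 \<le> w"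
  shows "L (c * t) (c * w) = c * L t w"
proof -
  have nt: "at_right (0::real) \<noteq> bot" by simp
  have l1: "((\<lambda>s. D2 D (s * (c * t)) (s * (c * w)) / s) \<longlongrightarrow> L (c * t) (c * w)) (at_right 0)"
    using tdf_lim[OF T] nn c by simp
  have fl: "filterlim (\<lambda>s. c * s) (at_right 0) (at_right (0::real))"
    unfolding filterlim_at
  proof
    show "\<forall>\<^sub>F x in at_right 0. c * x \<in> {0<..} \<and> c * x \<noteq> 0"
      unfolding eventually_at_right_field using c by (intro exI[of _ 1]) auto
    have "((\<lambda>s. c * s) \<longlongrightarrow> c * 0) (at_right (0::real))" by (intro tendsto_intros)
    then show "((\<lambda>s. c * s) \<longlongrightarrow> 0) (at_right (0::real))" by simp
  qed
  have "((\<lambda>s. D2 D ((c * s) * t) ((c * s) * w) / (c * s)) \<longlongrightarrow> L t w) (at_right 0)"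
    using filterlim_compose[OF tdf_lim[OF T nn] fl] by simp
  then have l2: "((\<lambda>s. c * (D2 D ((c * s) * t) ((c * s) * w) / (c * s))) \<longlongrightarrow> c * L t w) (at_right 0)"
    by (intro tendsto_intros)
  have eq: "(\<lambda>s. c * (D2 D ((c * s) * t) ((c * s) * w) / (c * s))) = (\<lambda>s. D2 D (s * (c * t)) (s * (c * w)) / s)"
    using c by (auto simp: fun_eq_iff mult.commute mult.left_commute)
  show ?thesis using tendsto_unique[OF nt l1 l2[unfolded eq]] .
qed

lemma L_good:
  assumes C: "copula 2 D" and T: "is_tdf_of L D" and w: "0 \<le> w"
  shows "good (\<lambda>x. L x w)"
  unfolding good_def
proof (rule conjI; intro allI impI)
  fix x y :: real assume xy: "0 \<le> x" "x \<le> y"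
  show "0 \<le> L y w - L x w \<and> L y w - L x w \<le> y - x"
    using Lprops(4,5)[OF C T xy(1) _ w w, of y] xy by auto
next
  fix s t u :: real assume stu: "0 < s" "s < t" "t < u"
  show "slope (\<lambda>x. L x w) t u \<le> slope (\<lambda>x. L x w) s t"
  proof (rule geo[OF _ _ stu])
    fix x y :: real assume xy: "0 \<le> x" "x \<le> y"
    show "0 \<le> L y w - L x w \<and> L y w - L x w \<le> y - x"
      using Lprops(4,5)[OF C T xy(1) _ w w, of y] xy by auto
  next
    fix x y c :: real assume xyc: "0 \<le> x" "x \<le> y" "1 \<le> c"
    have c0: "c > 0" using xyc by simp
    have wc: "0 \<le> w / c" "w / c \<le> w" using w xyc by (auto simp: divide_le_eq intro: mult_le_cancel_left1[THEN iffD2] order_trans[OF _ mult_right_mono[of 1 c w]])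
    have e1: "L (c * y) w = c * L y (w / c)" using Lhom[OF T c0, of y "w / c"] wc xyc c0 by simp
    have e2: "L (c * x) w = c * L x (w / c)" using Lhom[OF T c0, of x "w / c"] wc xyc c0 by simp
    have "L y (w / c) - L x (w / c) \<le> L y w - L x w"
      using Lprops(6)[OF C T xyc(1) _ wc(1) w] xyc wc by auto
    then have "c * (L y (w / c) - L x (w / c)) \<le> c * (L y w - L x w)"
      using c0 by (intro mult_left_mono) auto
    then show "L (c * y) w - L (c * x) w \<le> c * (L y w - L x w)"
      unfolding e1 e2 by (simp add: algebra_simps)
  qed
qed

lemma fh_halfline:
  assumes g: "good F" and B: "\<And>T. 0 \<le> T \<Longrightarrow> F T - F 0 \<le> B"
  shows "fh F integrable_on {0..} \<and> integral {0..} (fh F) \<le> B"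
proof (rule int_halfline)
  fix T :: real assume T: "0 \<le> T"
  show "integral {0..T} (fh F) \<le> B" using fh_int_bound[OF g T] B[OF T] by linarith
qed (use fh_01[OF g] fh_integrable[OF g] in auto)

lemma dom_halfline:
  fixes h :: "real \<Rightarrow> real"
  assumes g: "good F" and B: "\<And>T. 0 \<le> T \<Longrightarrow> F T - F 0 \<le> B"
    and anti: "\<And>x y. 0 \<le> x \<Longrightarrow> x \<le> y \<Longrightarrow> h y \<le> h x"
    and nn: "\<And>x. 0 \<le> x \<Longrightarrow> 0 \<le> h x"
    and le: "\<And>x. 0 \<le> x \<Longrightarrow> h x \<le> fh F x"
  shows "h integrable_on {0..} \<and> integral {0..} h \<le> B"
proof (rule int_halfline)
  show "\<And>T. 0 \<le> T \<Longrightarrow> h integrable_on {0..T}" using anti by (rule anti_int)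
  fix T :: real assume T: "0 \<le> T"
  have "integral {0..T} h \<le> integral {0..T} (fh F)"
    using anti le by (intro integral_le anti_int fh_integrable[OF g]) auto
  also have "\<dots> \<le> F T - F 0" by (rule fh_int_bound[OF g T])
  also have "\<dots> \<le> B" by (rule B[OF T])
  finally show "integral {0..T} h \<le> B" .
qed (rule nn)

lemma bathtub:
  assumes gk: "good Fk" and gm: "good Fm" and a: "0 \<le> a"
    and Bm: "\<And>T. 0 \<le> T \<Longrightarrow> Fm T - Fm 0 \<le> a"
  shows "(\<lambda>t. fh Fk t * fh Fm t) integrable_on {0..} \<and>
         integral {0..} (\<lambda>t. fh Fk t * fh Fm t) \<le> Fk a - Fk 0"
proof -
  define f where "f = fh Fk"
  define g where "g = fh Fm"
  define c where "c = f a"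
  have f01: "0 \<le> f t" "f t \<le> 1" for t using fh_01[OF gk] unfolding f_def by auto
  have g01: "0 \<le> g t" "g t \<le> 1" for t using fh_01[OF gm] unfolding g_def by auto
  have fanti: "f y \<le> f x" if "0 \<le> x" "x \<le> y" for x y using fh_anti[OF gk that] unfolding f_def .
  have ganti: "g y \<le> g x" if "0 \<le> x" "x \<le> y" for x y using fh_anti[OF gm that] unfolding g_def .
  have c0: "0 \<le> c" unfolding c_def by (rule f01)
  have gi: "g integrable_on {0..}" "integral {0..} g \<le> a"
    using fh_halfline[OF gm Bm] unfolding g_def by auto
  have pi: "(\<lambda>t. f t * g t) integrable_on {0..}"
  proof -
    have "(\<lambda>t. f t * g t) integrable_on {0..} \<and> integral {0..} (\<lambda>t. f t * g t) \<le> a"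
    proof (rule dom_halfline[OF gm Bm])
      fix x y :: real assume xy: "0 \<le> x" "x \<le> y"
      show "f y * g y \<le> f x * g x"
        using fanti[OF xy] ganti[OF xy] f01 g01 by (intro mult_mono) auto
    next
      fix x :: real
      show "0 \<le> f x * g x" using f01 g01 by simp
      show "f x * g x \<le> fh Fm x" using f01 g01 unfolding g_def[symmetric]
        by (simp add: mult_left_le_one_le)
    qed
    then show ?thesis by simp
  qed
  define r where "r t = (if t \<in> {..a} then f t else 0)" for t
  define ind where "ind t = (if t \<in> {..a} then 1 else (0::real))" for t
  have ri: "r integrable_on {0..}" "integral {0..} r = integral {0..a} f"
  proof -
    have "f integrable_on {0..a}" unfolding f_def by (rule fh_integrable[OF gk])
    then show "r integrable_on {0..}" unfolding r_def integrable_restrict_Int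
      by (simp add: atLeastAtMost_def Int_commute)
    show "integral {0..} r = integral {0..a} f"
      unfolding r_def integral_restrict_Int by (simp add: atLeastAtMost_def Int_commute)
  qed
  have oi: "ind integrable_on {0..}" "integral {0..} ind = a"
  proof -
    have "(\<lambda>_. 1::real) integrable_on {0..a}" by (rule integrable_const_ivl)
    then show "ind integrable_on {0..}" unfolding ind_def integrable_restrict_Int
      by (simp add: atLeastAtMost_def Int_commute)
    have "integral {0..} ind = integral {0..a} (\<lambda>_. 1::real)"
      unfolding ind_def integral_restrict_Int by (simp add: atLeastAtMost_def Int_commute)
    then show "integral {0..} ind = a" using a by simp
  qed
  have cgi: "(\<lambda>t. c * g t) integrable_on {0..}" using integrable_cmul[OF gi(1), of c] by simp
  have coi: "(\<lambda>t. c * ind t) integrable_on {0..}" using integrable_cmul[OF oi(1), of c] by simp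
  define R where "R t = r t + c * g t - c * ind t" for t
  have Ri: "R integrable_on {0..}" unfolding R_def
    by (intro integrable_diff integrable_add ri(1) cgi coi)
  have le: "f t * g t \<le> R t" if t: "t \<in> {0..}" for t
  proof (cases "t \<le> a")
    case True
    have "f t \<ge> c" unfolding c_def using fanti True t by auto
    then have "(f t - c) * (g t - 1) \<le> 0" using g01[of t] by (intro mult_nonneg_nonpos) auto
    then show ?thesis unfolding R_def r_def ind_def using True by (simp add: algebra_simps)
  next
    case False
    have "f t \<le> c" unfolding c_def using fanti False a by auto
    then have "f t * g t \<le> c * g t" using g01[of t] by (intro mult_right_mono) auto
    then show ?thesis unfolding R_def r_def ind_def using False by simp
  qed
  have "integral {0..} (\<lambda>t. f t * g t) \<le> integral {0..} R"
    by (rule integral_le[OF pi Ri le])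
  also have "integral {0..} R = integral {0..a} f + c * integral {0..} g - c * a"
  proof -
    have "integral {0..} R = integral {0..} r + integral {0..} (\<lambda>t. c * g t) - integral {0..} (\<lambda>t. c * ind t)"
      unfolding R_def by (simp add: integral_diff integral_add integrable_add ri(1) cgi coi)
    also have "\<dots> = integral {0..a} f + c * integral {0..} g - c * a"
      using ri(2) oi(2) integral_mult[OF gi(1), of c] integral_mult[OF oi(1), of c] by simp
    finally show ?thesis .
  qed
  also have "\<dots> \<le> integral {0..a} f"
  proof -
    have "c * integral {0..} g \<le> c * a" using c0 gi(2) by (intro mult_left_mono) auto
    then show ?thesis by simp
  qed
  also have "\<dots> \<le> Fk a - Fk 0" unfolding f_def by (rule fh_int_bound[OF gk a])
  finally show ?thesis using pi unfolding f_def g_def by simp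
qed

lemma prod_two_le:
  fixes x :: "nat \<Rightarrow> real"
  assumes "finite A" "k \<in> A" "m \<in> A" "k \<noteq> m" "\<And>i. i \<in> A \<Longrightarrow> 0 \<le> x i \<and> x i \<le> 1"
  shows "prod x A \<le> x k * x m"
proof -
  have "prod x A = x k * prod x (A - {k})" using assms by (simp add: prod.remove)
  also have "prod x (A - {k}) = x m * prod x (A - {k} - {m})"
    using assms by (intro prod.remove) auto
  finally have eq: "prod x A = x k * x m * prod x (A - {k} - {m})" by simp
  have "prod x (A - {k} - {m}) \<le> 1" using assms(5) by (intro prod_le_1) auto
  moreover have "0 \<le> x k * x m" using assms by simp
  ultimately show ?thesis unfolding eq by (simp add: mult_left_le)
qed

theorem mainTheorem5:
  fixes d :: nat and C :: "(nat \<Rightarrow> real) \<Rightarrow> real"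
    and L :: "nat \<Rightarrow> real \<Rightarrow> real \<Rightarrow> real" and w :: "nat \<Rightarrow> real" and k :: nat
  assumes "d \<ge> 2"
    and "\<forall>i<d. L i \<in> M2"
    and "copula d C"
    and "\<forall>u. (\<forall>i<d. u i \<in> {0..1}) \<longrightarrow> C u \<le> indep_copula d u"
    and "k < d"
    and "\<forall>i<d. w i \<ge> 0"
  shows "phi d C L w \<le> phi d (indep_copula d) L w \<and>
         phi d (indep_copula d) L w \<le> Min {L k (w m) (w k) | m. m < d \<and> m \<noteq> k}"
proof -
  have "\<forall>i<d. \<exists>D. copula 2 D \<and> is_tdf_of (L i) D" using assms(2) by (auto simp: M2_def)
  then obtain DD where DD: "\<And>i. i < d \<Longrightarrow> copula 2 (DD i) \<and> is_tdf_of (L i) (DD i)" by metis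
  have w0: "\<And>i. i < d \<Longrightarrow> 0 \<le> w i" using assms(6) by auto
  define Fi where "Fi i = (\<lambda>x. L i x (w i))" for i
  have gF: "good (Fi i)" if "i < d" for i
    unfolding Fi_def using L_good DD[OF that] w0[OF that] by blast
  have L0: "L i 0 (w i) = 0" if "i < d" for i
    using Lprops(1,2)[of "DD i" "L i" 0 0 "w i" "w i"] DD[OF that] w0[OF that] by force
  have LF: "Fi i T - Fi i 0 \<le> w i" if "i < d" "0 \<le> T" for i T
    using Lprops(3)[of "DD i" "L i" T T "w i" "w i"] DD[OF that(1)] w0[OF that(1)] that(2) L0[OF that(1)]
    unfolding Fi_def by force
  define fv where "fv t = (\<lambda>i. if i < d then fh (Fi i) t else partial1 (L i) t (w i))" for t
  define E where "E = insert 0 (\<Union>i\<in>{..<d}. badset (Fi i))"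
  have cE: "countable E" unfolding E_def using badset_countable gF by auto
  have negE: "negligible E"
  proof -
    have "negligible (\<Union>((\<lambda>x. {x}) ` E))" using cE by (intro negligible_countable_Union) auto
    then show ?thesis by simp
  qed
  have fveq: "(\<lambda>i. partial1 (L i) t (w i)) = fv t" if t: "t \<in> {0..} - E" for t
  proof
    fix i
    show "partial1 (L i) t (w i) = fv t i"
    proof (cases "i < d")
      case True
      have tp: "0 < t" "t \<notin> badset (Fi i)" using t True unfolding E_def by auto
      have "deriv (Fi i) t = rd (Fi i) t" using good_deriv[OF gF[OF True] tp] by (rule DERIV_imp_deriv)
      then show ?thesis using True tp unfolding fv_def partial1_def fh_def Fi_def by simp
    qed (simp add: fv_def)
  qed
  have phiX: "phi d X L w = integral {0..} (\<lambda>t. X (fv t))" for X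
    unfolding phi_def by (rule integral_spike[OF negE]) (simp add: fveq)
  have fvbox: "\<forall>i<d. fv t i \<in> {0..1}" for t using fh_01[OF gF] by (auto simp: fv_def)
  have fvanti: "\<forall>i<d. fv y i \<le> fv x i" if "0 \<le> x" "x \<le> y" for x y
    using fh_anti[OF gF that] by (auto simp: fv_def)
  define hP where "hP t = indep_copula d (fv t)" for t
  define hC where "hC t = C (fv t)" for t
  have hPeq: "hP t = (\<Prod>i<d. fh (Fi i) t)" for t unfolding hP_def indep_copula_def fv_def by simp
  define m0 where "m0 = (if k = 0 then 1 else (0::nat))"
  have m0: "m0 < d" "m0 \<noteq> k" using assms(1,5) unfolding m0_def by auto
  have hP_le2: "hP t \<le> fh (Fi k) t * fh (Fi m) t" if "m < d" "m \<noteq> k" for t m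
    unfolding hPeq
  proof (rule prod_two_le)
    fix i assume "i \<in> {..<d}"
    then have "i < d" by simp
    then show "0 \<le> fh (Fi i) t \<and> fh (Fi i) t \<le> 1" using fh_01[OF gF] by blast
  qed (use that assms(5) in auto)
  have hP_le: "hP t \<le> fh (Fi k) t" for t
  proof -
    have "hP t \<le> fh (Fi k) t * fh (Fi m0) t" by (rule hP_le2[OF m0])
    also have "\<dots> \<le> fh (Fi k) t" using fh_01[OF gF[OF assms(5)]] fh_01[OF gF[OF m0(1)]]
      by (simp add: mult_left_le)
    finally show ?thesis .
  qed
  have hP_nn: "0 \<le> hP t" for t unfolding hPeq using fh_01[OF gF] by (intro prod_nonneg) auto
  have hC_le: "hC t \<le> hP t" for t unfolding hC_def hP_def using spec[OF assms(4), of "fv t"] fvbox[of t] by (rule mp)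
  have hC_nn: "0 \<le> hC t" for t unfolding hC_def using copula_nonneg'[OF assms(3) fvbox] .
  have hP_anti: "hP y \<le> hP x" if "0 \<le> x" "x \<le> y" for x y
    unfolding hPeq using fh_anti[OF gF that] fh_01[OF gF] by (intro prod_mono) auto
  have hC_anti: "hC y \<le> hC x" if "0 \<le> x" "x \<le> y" for x y
    unfolding hC_def using copula_mono[OF assms(3) fvbox fvbox fvanti[OF that]] .
  have iP: "hP integrable_on {0..}"
    using dom_halfline[OF gF[OF assms(5)] LF[OF assms(5)] hP_anti hP_nn hP_le] by simp
  have iC: "hC integrable_on {0..}"
    using dom_halfline[OF gF[OF assms(5)] LF[OF assms(5)] hC_anti hC_nn order_trans[OF hC_le hP_le]] by simp
  have first: "phi d C L w \<le> phi d (indep_copula d) L w"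
    unfolding phiX hC_def[symmetric] hP_def[symmetric]
    by (rule integral_le[OF iC iP hC_le])
  have second: "phi d (indep_copula d) L w \<le> L k (w m) (w k)" if m: "m < d" "m \<noteq> k" for m
  proof -
    have bt: "(\<lambda>t. fh (Fi k) t * fh (Fi m) t) integrable_on {0..} \<and>
         integral {0..} (\<lambda>t. fh (Fi k) t * fh (Fi m) t) \<le> Fi k (w m) - Fi k 0"
      by (rule bathtub[OF gF[OF assms(5)] gF[OF m(1)] w0[OF m(1)] LF[OF m(1)]])
    have "phi d (indep_copula d) L w = integral {0..} hP" unfolding phiX hP_def ..
    also have "\<dots> \<le> integral {0..} (\<lambda>t. fh (Fi k) t * fh (Fi m) t)"
      using bt hP_le2[OF m] by (intro integral_le[OF iP]) auto
    also have "\<dots> \<le> Fi k (w m) - Fi k 0" using bt by simp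
    also have "\<dots> = L k (w m) (w k)" using L0[OF assms(5)] unfolding Fi_def by simp
    finally show ?thesis .
  qed
  have fin: "finite {L k (w m) (w k) | m. m < d \<and> m \<noteq> k}" by simp
  have ne: "{L k (w m) (w k) | m. m < d \<and> m \<noteq> k} \<noteq> {}" using m0 by auto
  have "phi d (indep_copula d) L w \<le> Min {L k (w m) (w k) | m. m < d \<and> m \<noteq> k}"
    using second by (auto simp: Min_ge_iff[OF fin ne])
  with first show ?thesis by simp
qed

end
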